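(* Let $W\in\mathbb{R}^{k\times k}$ and $\alpha\in(0,\gamma_2(W))$. There is $\ell\in\mathbb{N}$ with $\ell\lesssim\frac{\gamma_2(W)^2\log k}{\alpha^2}$ such that $\gamma_2^\ell(W;\alpha)\lesssim\gamma_2(W)$ (where $\lesssim$ means up to a universal constant factor).
   Context: $\|A\|_{1\to2}$ is the maximum Euclidean column norm, $\|A\|_\infty$ the maximum absolute entry. $\gamma_2(W)=\min_{L^TR=W}\|L\|_{1\to2}\|R\|_{1\to2}$ over matrices $L,R$ with any number of rows; $\gamma_2^\ell(W)$ is the same minimum restricted to $L,R\in\mathbb{R}^{\ell\times k}$; $\gamma_2^\ell(W;\alpha)=\min_{\|\tilde W-W\|_\infty\le\alpha}\gamma_2^\ell(\tilde W)$. *)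

theory Defs
  imports "HOL-Analysis.Analysis"
begin

text \<open>Matrices are functions nat => nat => real; only entries inside the stated
  dimensions are read. An m x k matrix L has entries L i j for i < m, j < k.\<close>

definition col_norm :: "nat \<Rightarrow> nat \<Rightarrow> (nat \<Rightarrow> nat \<Rightarrow> real) \<Rightarrow> real" where
  "col_norm m k L = Max ((\<lambda>j. sqrt (\<Sum>i<m. (L i j)\<^sup>2)) ` {..<k})"

definition factors :: "nat \<Rightarrow> nat \<Rightarrow> (nat \<Rightarrow> nat \<Rightarrow> real) \<Rightarrow> (nat \<Rightarrow> nat \<Rightarrow> real)
    \<Rightarrow> (nat \<Rightarrow> nat \<Rightarrow> real) \<Rightarrow> bool" where
  "factors m k L R W \<longleftrightarrow> (\<forall>j<k. \<forall>j'<k. (\<Sum>i<m. L i j * R i j') = W j j')"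

definition gamma2 :: "nat \<Rightarrow> (nat \<Rightarrow> nat \<Rightarrow> real) \<Rightarrow> real" where
  "gamma2 k W = Inf {col_norm m k L * col_norm m k R | m L R. factors m k L R W}"

text \<open>gamma_2^l(W): minimum over l x k factorizations (infinity if none exist).\<close>
definition gamma2_dim :: "nat \<Rightarrow> nat \<Rightarrow> (nat \<Rightarrow> nat \<Rightarrow> real) \<Rightarrow> ereal" where
  "gamma2_dim l k W = Inf {ereal (col_norm l k L * col_norm l k R) | L R. factors l k L R W}"

definition gamma2_dim_approx :: "nat \<Rightarrow> nat \<Rightarrow> (nat \<Rightarrow> nat \<Rightarrow> real) \<Rightarrow> real \<Rightarrow> ereal" where
  "gamma2_dim_approx l k W \<alpha> =
     Inf {gamma2_dim l k W' | W'. \<forall>i<k. \<forall>j<k. \<bar>W' i j - W i j\<bar> \<le> \<alpha>}"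

end

theory Submission
  imports Defs "HOL-Probability.Hoeffding"
begin


lemma cosh_le_aux: fixes x :: real assumes "x \<ge> 0"
  shows "(exp x + exp (-x))/2 \<le> exp (x^2/2)"
proof -
  have "-(2*x)*(1/2) + ln (1 + (1/2)*(exp (2*x) - 1)) \<le> (2*x)^2/8"
    using Hoeffdings_lemma_aux[of "2*x" "1/2"] assms by simp
  hence "ln ((1 + exp (2*x))/2) \<le> x + x^2/2"
    by (simp add: power2_eq_square field_simps)
  hence "(1 + exp (2*x))/2 \<le> exp (x + x^2/2)"
    by (smt (verit, best) exp_gt_zero exp_le_cancel_iff exp_ln)
  hence "exp (-x) * ((1 + exp (2*x))/2) \<le> exp (-x) * exp (x + x^2/2)"
    by simp
  moreover have "exp (-x) * ((1 + exp (2*x))/2) = (exp x + exp (-x))/2"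
    by (simp add: field_simps flip: exp_add)
  moreover have "exp (-x) * exp (x + x^2/2) = exp (x^2/2)"
    by (simp flip: exp_add)
  ultimately show ?thesis by simp
qed

lemma cosh_le: fixes x :: real shows "(exp x + exp (-x))/2 \<le> exp (x^2/2)"
proof (cases "x \<ge> 0")
  case True thus ?thesis by (rule cosh_le_aux)
next
  case False
  hence "(exp (-x) + exp (-(-x)))/2 \<le> exp ((-x)^2/2)" by (intro cosh_le_aux) auto
  thus ?thesis by simp
qed

primrec Erad :: "nat \<Rightarrow> ((nat \<Rightarrow> real) \<Rightarrow> real) \<Rightarrow> real" where
  "Erad 0 f = f (\<lambda>_. 0)"
| "Erad (Suc m) f = (Erad m (\<lambda>e. f (e(m := 1))) + Erad m (\<lambda>e. f (e(m := -1)))) / 2"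

lemma Erad_add: "Erad m (\<lambda>e. f e + g e) = Erad m f + Erad m g"
  by (induction m arbitrary: f g) (simp_all add: field_simps)

lemma Erad_cmult: "Erad m (\<lambda>e. c * f e) = c * Erad m f"
  by (induction m arbitrary: f) (simp_all add: field_simps)

lemma Erad_const: "Erad m (\<lambda>e. c) = c"
  by (induction m) simp_all

lemma Erad_mono: "(\<And>e. f e \<le> g e) \<Longrightarrow> Erad m f \<le> Erad m g"
proof (induction m arbitrary: f g)
  case 0 thus ?case by simp
next
  case (Suc m)
  have "Erad m (\<lambda>e. f (e(m := 1))) \<le> Erad m (\<lambda>e. g (e(m := 1)))"
    by (rule Suc.IH) (rule Suc.prems)
  moreover have "Erad m (\<lambda>e. f (e(m := -1))) \<le> Erad m (\<lambda>e. g (e(m := -1)))"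
    by (rule Suc.IH) (rule Suc.prems)
  ultimately show ?case by simp
qed

primrec Erows :: "nat \<Rightarrow> nat \<Rightarrow> ((nat \<Rightarrow> nat \<Rightarrow> real) \<Rightarrow> real) \<Rightarrow> real" where
  "Erows m 0 f = f (\<lambda>_ _. 0)"
| "Erows m (Suc l) f = Erad m (\<lambda>e. Erows m l (\<lambda>G. f (G(l := e))))"

lemma Erows_add: "Erows m l (\<lambda>G. f G + g G) = Erows m l f + Erows m l g"
  by (induction l arbitrary: f g) (simp_all add: Erad_add)

lemma Erows_cmult: "Erows m l (\<lambda>G. c * f G) = c * Erows m l f"
  by (induction l arbitrary: f) (simp_all add: Erad_cmult)

lemma Erows_const: "Erows m l (\<lambda>G. c) = c"
  by (induction l) (simp_all add: Erad_const)

lemma Erows_mono: "(\<And>G. f G \<le> g G) \<Longrightarrow> Erows m l f \<le> Erows m l g"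
proof (induction l arbitrary: f g)
  case 0 thus ?case by simp
next
  case (Suc l)
  show ?case by simp (intro Erad_mono Suc.IH Suc.prems)
qed

lemma Erows_sum: "finite Q \<Longrightarrow> Erows m l (\<lambda>G. \<Sum>q\<in>Q. f q G) = (\<Sum>q\<in>Q. Erows m l (f q))"
  by (induction Q rule: finite_induct) (simp_all add: Erows_const Erows_add)

lemma Erows_prod: "Erows m l (\<lambda>G. \<Prod>r<l. h (G r)) = (Erad m h) ^ l"
proof (induction l)
  case 0 thus ?case by simp
next
  case (Suc l)
  have "Erows m (Suc l) (\<lambda>G. \<Prod>r<Suc l. h (G r))
      = Erad m (\<lambda>e. Erows m l (\<lambda>G. h e * (\<Prod>r<l. h (G r))))"
    by (simp add: mult.commute)
  also have "\<dots> = Erad m (\<lambda>e. h e * (Erad m h) ^ l)"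
    by (simp add: Erows_cmult Suc.IH)
  also have "\<dots> = (Erad m h) ^ Suc l"
    using Erad_cmult[of m "(Erad m h) ^ l" h] by (simp add: mult.commute)
  finally show ?case .
qed

definition lin :: "nat \<Rightarrow> (nat \<Rightarrow> real) \<Rightarrow> (nat \<Rightarrow> real) \<Rightarrow> real" where
  "lin m e z = (\<Sum>i<m. e i * z i)"

definition sq :: "nat \<Rightarrow> (nat \<Rightarrow> real) \<Rightarrow> real" where
  "sq m z = (\<Sum>i<m. (z i)^2)"

lemma lin_upd: "lin (Suc m) (e(m := s)) z = lin m e z + s * z m"
proof -
  have "(\<Sum>i<m. (e(m := s)) i * z i) = (\<Sum>i<m. e i * z i)"
    by (intro sum.cong) auto
  thus ?thesis by (simp add: lin_def)
qed

lemma sq_nonneg: "sq m z \<ge> 0"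
  unfolding sq_def by (intro sum_nonneg) auto


lemma pointwise_step: fixes t Y a :: real
  shows "(exp (t * (Y + a)^2) + exp (t * (Y - a)^2)) / 2
         \<le> exp (t * a^2) * exp ((t + 2 * a^2 * t^2) * Y^2)"
proof -
  have "t * (Y + a)^2 = (t*Y^2 + t*a^2) + (2*t*a*Y)"
    by (simp add: power2_eq_square algebra_simps)
  hence e1: "exp (t * (Y + a)^2) = exp (t*Y^2 + t*a^2) * exp (2*t*a*Y)"
    by (simp add: exp_add)
  have q2: "t * (Y - a)^2 = (t*Y^2 + t*a^2) + (-(2*t*a*Y))"
    by (simp add: power2_eq_square algebra_simps)
  have e2: "exp (t * (Y - a)^2) = exp (t*Y^2 + t*a^2) * exp (-(2*t*a*Y))"
    unfolding q2 by (rule exp_add)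
  have "(exp (t * (Y + a)^2) + exp (t * (Y - a)^2)) / 2
      = exp (t*Y^2 + t*a^2) * ((exp (2*t*a*Y) + exp (-(2*t*a*Y)))/2)"
    by (simp add: e1 e2 field_simps)
  also have "\<dots> \<le> exp (t*Y^2 + t*a^2) * exp ((2*t*a*Y)^2/2)"
    by (intro mult_left_mono cosh_le) auto
  also have "\<dots> = exp (t * a^2) * exp ((t + 2 * a^2 * t^2) * Y^2)"
    by (simp add: power2_eq_square algebra_simps flip: exp_add)
  finally show ?thesis .
qed

lemma arith_step:
  fixes t a s :: real
  assumes s: "s \<ge> 0" and h: "\<bar>t\<bar> * (s + a^2) \<le> 1/4"
  shows "\<bar>t + 2 * a^2 * t^2\<bar> * s \<le> 1/4"
    and "t * a^2 + ((t + 2 * a^2 * t^2) * s + 4 * (t + 2 * a^2 * t^2)^2 * s^2)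
         \<le> t * (s + a^2) + 4 * t^2 * (s + a^2)^2"
proof -
  define u where "u = \<bar>t\<bar> * s"
  have a2: "a^2 \<ge> 0" by simp
  have u0: "u \<ge> 0" using s by (simp add: u_def)
  have u4: "u \<le> 1/4" using h s a2 unfolding u_def
    by (smt (verit) abs_ge_zero mult_left_mono)
  have t2: "t^2 = \<bar>t\<bar> * \<bar>t\<bar>" by (simp add: power2_eq_square abs_mult_self_eq)
  have "\<bar>t + 2 * a^2 * t^2\<bar> * s \<le> (\<bar>t\<bar> + 2 * a^2 * t^2) * s"
  proof (intro mult_right_mono[OF _ s])
    have "\<bar>2 * a^2 * t^2\<bar> = 2 * a^2 * t^2" by simp
    thus "\<bar>t + 2 * a^2 * t^2\<bar> \<le> \<bar>t\<bar> + 2 * a^2 * t^2"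
      using abs_triangle_ineq[of t "2 * a^2 * t^2"] by linarith
  qed
  also have "\<dots> = u + a^2 * \<bar>t\<bar> * (2 * u)" by (simp add: u_def t2 algebra_simps)
  also have "\<dots> \<le> u + a^2 * \<bar>t\<bar> * 1"
    using u4 by (intro add_left_mono mult_left_mono) auto
  also have "\<dots> = \<bar>t\<bar> * (s + a^2)" by (simp add: u_def algebra_simps)
  finally show "\<bar>t + 2 * a^2 * t^2\<bar> * s \<le> 1/4" using h by linarith
  have k1: "16 * s^2 * a^2 * t^3 \<le> 4 * a^2 * t^2 * s"
  proof -
    have "16 * s^2 * a^2 * t^3 \<le> 16 * s^2 * a^2 * (t^2 * \<bar>t\<bar>)"
    proof (intro mult_left_mono)
      have "t^2 * t \<le> t^2 * \<bar>t\<bar>" by (intro mult_left_mono) auto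
      thus "t^3 \<le> t^2 * \<bar>t\<bar>" by (simp add: power3_eq_cube power2_eq_square)
    qed auto
    also have "\<dots> = (4 * a^2 * t^2 * s) * (4 * u)" by (simp add: u_def power2_eq_square algebra_simps)
    also have "\<dots> \<le> (4 * a^2 * t^2 * s) * 1"
      using u4 s by (intro mult_left_mono) auto
    finally show ?thesis by simp
  qed
  have k2: "16 * s^2 * a^4 * t^4 \<le> a^4 * t^2"
  proof -
    have "16 * s^2 * a^4 * t^4 = (a^4 * t^2) * (16 * u^2)"
      by (simp add: u_def power2_eq_square power4_eq_xxxx t2 algebra_simps)
    also have "\<dots> \<le> (a^4 * t^2) * 1"
    proof (intro mult_left_mono)
      have "u^2 \<le> (1/4)^2" using u0 u4 by (intro power_mono) auto
      thus "16 * u^2 \<le> 1" by (simp add: power2_eq_square)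
    qed auto
    finally show ?thesis by simp
  qed
  have k3: "a^2 * t^2 * s \<ge> 0" using s by simp
  have expand: "(t + 2 * a^2 * t^2)^2 = t^2 + 4 * a^2 * t^3 + 4 * a^4 * t^4"
    by (simp add: power2_eq_square power3_eq_cube power4_eq_xxxx algebra_simps)
  have lhs: "t * a^2 + ((t + 2 * a^2 * t^2) * s + 4 * (t + 2 * a^2 * t^2)^2 * s^2)
      = t * (s + a^2) + 4 * t^2 * s^2 + 2 * a^2 * t^2 * s + 16 * s^2 * a^2 * t^3 + 16 * s^2 * a^4 * t^4"
    unfolding expand by (simp add: algebra_simps)
  have rhs: "t * (s + a^2) + 4 * t^2 * (s + a^2)^2
      = t * (s + a^2) + 4 * t^2 * s^2 + 8 * a^2 * t^2 * s + 4 * a^4 * t^2"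
    by (simp add: power2_eq_square power4_eq_xxxx algebra_simps)
  have a4: "a^4 * t^2 \<ge> 0" by simp
  show "t * a^2 + ((t + 2 * a^2 * t^2) * s + 4 * (t + 2 * a^2 * t^2)^2 * s^2)
         \<le> t * (s + a^2) + 4 * t^2 * (s + a^2)^2"
    unfolding lhs rhs using k1 k2 k3 a4 by linarith
qed

lemma Erad_avg: "Erad m (\<lambda>e. (f e + g e) / 2) = (Erad m f + Erad m g) / 2"
  using Erad_cmult[of m "1/2" "\<lambda>e. f e + g e"] by (simp add: Erad_add)

lemma mgf:
  "\<bar>t\<bar> * sq m z \<le> 1/4 \<Longrightarrow>
   Erad m (\<lambda>e. exp (t * (lin m e z)^2)) \<le> exp (t * sq m z + 4 * t^2 * (sq m z)^2)"
proof (induction m arbitrary: t)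
  case 0 thus ?case by (simp add: lin_def sq_def)
next
  case (Suc m)
  define s where "s = sq m z"
  define a where "a = z m"
  have sqS: "sq (Suc m) z = s + a^2" by (simp add: sq_def s_def a_def)
  have s0: "s \<ge> 0" unfolding s_def by (rule sq_nonneg)
  note ar = arith_step[OF s0, of t a]
  have h: "\<bar>t\<bar> * (s + a^2) \<le> 1/4" using Suc.prems sqS by simp
  have "Erad (Suc m) (\<lambda>e. exp (t * (lin (Suc m) e z)^2))
      = Erad m (\<lambda>e. (exp (t * (lin m e z + a)^2) + exp (t * (lin m e z - a)^2)) / 2)"
    by (simp add: lin_upd a_def Erad_avg)
  also have "\<dots> \<le> Erad m (\<lambda>e. exp (t * a^2) * exp ((t + 2 * a^2 * t^2) * (lin m e z)^2))"
    by (intro Erad_mono pointwise_step)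
  also have "\<dots> = exp (t * a^2) * Erad m (\<lambda>e. exp ((t + 2 * a^2 * t^2) * (lin m e z)^2))"
    by (rule Erad_cmult)
  also have "\<dots> \<le> exp (t * a^2) * exp ((t + 2 * a^2 * t^2) * s + 4 * (t + 2 * a^2 * t^2)^2 * s^2)"
    using Suc.IH[of "t + 2 * a^2 * t^2"] ar(1)[OF h] by (simp add: s_def)
  also have "\<dots> = exp (t * a^2 + ((t + 2 * a^2 * t^2) * s + 4 * (t + 2 * a^2 * t^2)^2 * s^2))"
    by (simp flip: exp_add)
  also have "\<dots> \<le> exp (t * (s + a^2) + 4 * t^2 * (s + a^2)^2)"
    using ar(2)[OF h] by simp
  finally show ?case by (simp add: sqS)
qed


lemma Erad_nonneg: "(\<And>e. f e \<ge> 0) \<Longrightarrow> Erad m f \<ge> 0"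
  using Erad_mono[of "\<lambda>_. 0" f m] by (simp add: Erad_const)

lemma chernoff:
  assumes "\<bar>s\<bar> * sq m z \<le> 1/4"
  shows "Erows m l (\<lambda>G. exp (s * (\<Sum>r<l. (lin m (G r) z)^2) + c))
         \<le> exp (c + real l * (s * sq m z + 4 * s^2 * (sq m z)^2))"
proof -
  have eq: "exp (s * (\<Sum>r<l. (lin m (G r) z)^2) + c) = exp c * (\<Prod>r<l. exp (s * (lin m (G r) z)^2))" for G
    by (simp add: exp_add exp_sum sum_distrib_left mult.commute)
  have "Erows m l (\<lambda>G. exp (s * (\<Sum>r<l. (lin m (G r) z)^2) + c))
      = exp c * (Erad m (\<lambda>e. exp (s * (lin m e z)^2))) ^ l"
    using Erows_prod[of m l "\<lambda>e. exp (s * (lin m e z)^2)"] by (simp only: eq Erows_cmult)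
  also have "\<dots> \<le> exp c * (exp (s * sq m z + 4 * s^2 * (sq m z)^2)) ^ l"
    by (intro mult_left_mono power_mono mgf assms Erad_nonneg) auto
  also have "\<dots> = exp (c + real l * (s * sq m z + 4 * s^2 * (sq m z)^2))"
    by (simp add: exp_add exp_of_nat_mult)
  finally show ?thesis .
qed

definition phi :: "nat \<Rightarrow> nat \<Rightarrow> real \<Rightarrow> real \<Rightarrow> (nat \<Rightarrow> real) \<Rightarrow> (nat \<Rightarrow> nat \<Rightarrow> real) \<Rightarrow> real" where
  "phi m l t \<beta> z G =
     exp (t * (((\<Sum>r<l. (lin m (G r) z)^2) - real l * sq m z) - real l * \<beta>))
   + exp (- t * (((\<Sum>r<l. (lin m (G r) z)^2) - real l * sq m z) + real l * \<beta>))"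

lemma phi_nonneg: "phi m l t \<beta> z G \<ge> 0"
  unfolding phi_def by (intro add_nonneg_nonneg) auto

lemma phi_ge1:
  assumes "t \<ge> 0" "\<bar>(\<Sum>r<l. (lin m (G r) z)^2) - real l * sq m z\<bar> \<ge> real l * \<beta>"
  shows "phi m l t \<beta> z G \<ge> 1"
proof -
  define D where "D = (\<Sum>r<l. (lin m (G r) z)^2) - real l * sq m z"
  have "D - real l * \<beta> \<ge> 0 \<or> D + real l * \<beta> \<le> 0" using assms(2) unfolding D_def by linarith
  hence "exp (t * (D - real l * \<beta>)) \<ge> 1 \<or> exp (- t * (D + real l * \<beta>)) \<ge> 1"
  proof
    assume "D - real l * \<beta> \<ge> 0"
    hence "t * (D - real l * \<beta>) \<ge> 0" using assms(1) by simp
    thus ?thesis by simp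
  next
    assume "D + real l * \<beta> \<le> 0"
    hence "- t * (D + real l * \<beta>) \<ge> 0" using assms(1) by (simp add: mult_nonneg_nonpos)
    thus ?thesis by simp
  qed
  thus ?thesis unfolding phi_def D_def[symmetric]
    by (smt (verit) exp_gt_zero)
qed

lemma event_bound:
  assumes S: "sq m z \<le> B" and b0: "0 < \<beta>" and bB: "\<beta> \<le> B" and t: "t = \<beta> / (8 * B^2)"
  shows "Erows m l (phi m l t \<beta> z) \<le> 2 * exp (- (real l * \<beta>^2 / (16 * B^2)))"
proof -
  define S where "S = sq m z"
  have S0: "0 \<le> S" unfolding S_def by (rule sq_nonneg)
  have SB: "S \<le> B" using S by (simp add: S_def)
  have B0: "B > 0" using b0 bB by linarith
  have t0: "t \<ge> 0" using t b0 by simp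
  have tS: "\<bar>t\<bar> * S \<le> 1/4"
  proof -
    have "\<bar>t\<bar> * S \<le> t * B" using t0 SB by (simp add: mult_left_mono)
    also have "\<dots> = \<beta> / (8 * B)" using B0 by (simp add: t power2_eq_square)
    also have "\<dots> \<le> 1/4" using bB B0 by (simp add: field_simps)
    finally show ?thesis .
  qed
  have q: "4 * t^2 * S^2 - t * \<beta> \<le> - (\<beta>^2 / (16 * B^2))"
  proof -
    have "S^2 \<le> B^2" using S0 SB by (intro power_mono) auto
    hence "4 * t^2 * S^2 \<le> 4 * t^2 * B^2" by (intro mult_left_mono) auto
    also have "4 * t^2 * B^2 = \<beta>^2 / (16 * B^2)" using B0 by (simp add: t field_simps power2_eq_square)
    finally have "4 * t^2 * S^2 \<le> \<beta>^2 / (16 * B^2)" .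
    moreover have "t * \<beta> = \<beta>^2 / (8 * B^2)" by (simp add: t power2_eq_square)
    ultimately show ?thesis by (simp add: field_simps)
  qed
  have lq: "real l * (4 * t^2 * S^2 - t * \<beta>) \<le> - (real l * \<beta>^2 / (16 * B^2))"
    using mult_left_mono[OF q, of "real l"] by simp
  have eq1: "(\<lambda>G. exp (t * (((\<Sum>r<l. (lin m (G r) z)^2) - real l * sq m z) - real l * \<beta>)))
      = (\<lambda>G. exp (t * (\<Sum>r<l. (lin m (G r) z)^2) + (- t * real l * S - t * real l * \<beta>)))"
    by (simp add: S_def algebra_simps)
  have eq2: "(\<lambda>G. exp (- t * (((\<Sum>r<l. (lin m (G r) z)^2) - real l * sq m z) + real l * \<beta>)))
      = (\<lambda>G. exp ((- t) * (\<Sum>r<l. (lin m (G r) z)^2) + (t * real l * S - t * real l * \<beta>)))"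
    by (simp add: S_def algebra_simps)
  have c1: "Erows m l (\<lambda>G. exp (t * (((\<Sum>r<l. (lin m (G r) z)^2) - real l * sq m z) - real l * \<beta>)))
      \<le> exp (- (real l * \<beta>^2 / (16 * B^2)))"
  proof -
    have "Erows m l (\<lambda>G. exp (t * (((\<Sum>r<l. (lin m (G r) z)^2) - real l * sq m z) - real l * \<beta>)))
        \<le> exp ((- t * real l * S - t * real l * \<beta>) + real l * (t * S + 4 * t^2 * S^2))"
      unfolding eq1 S_def using chernoff tS S_def by blast
    also have "\<dots> = exp (real l * (4 * t^2 * S^2 - t * \<beta>))" by (simp add: algebra_simps)
    also have "\<dots> \<le> exp (- (real l * \<beta>^2 / (16 * B^2)))" using lq by simp
    finally show ?thesis .
  qed
  have c2: "Erows m l (\<lambda>G. exp (- t * (((\<Sum>r<l. (lin m (G r) z)^2) - real l * sq m z) + real l * \<beta>)))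
      \<le> exp (- (real l * \<beta>^2 / (16 * B^2)))"
  proof -
    have tS': "\<bar>- t\<bar> * S \<le> 1/4" using tS by simp
    have "Erows m l (\<lambda>G. exp (- t * (((\<Sum>r<l. (lin m (G r) z)^2) - real l * sq m z) + real l * \<beta>)))
        \<le> exp ((t * real l * S - t * real l * \<beta>) + real l * ((- t) * S + 4 * (- t)^2 * S^2))"
      unfolding eq2 S_def using chernoff tS' S_def by blast
    also have "\<dots> = exp (real l * (4 * t^2 * S^2 - t * \<beta>))" by (simp add: algebra_simps)
    also have "\<dots> \<le> exp (- (real l * \<beta>^2 / (16 * B^2)))" using lq by simp
    finally show ?thesis .
  qed
  show ?thesis unfolding phi_def Erows_add using c1 c2 by linarith
qed


definition dev :: "nat \<Rightarrow> nat \<Rightarrow> (nat \<Rightarrow> nat \<Rightarrow> real) \<Rightarrow> (nat \<Rightarrow> real) \<Rightarrow> real" where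
  "dev m l G z = (\<Sum>r<l. (lin m (G r) z)^2) - real l * sq m z"

lemma jl_exists:
  fixes x y :: "nat \<Rightarrow> nat \<Rightarrow> real"
  assumes bx: "\<forall>j<k. sq m (x j) \<le> B" and by': "\<forall>j<k. sq m (y j) \<le> B"
    and bp: "\<forall>j<k. \<forall>j'<k. sq m (\<lambda>i. x j i + y j' i) \<le> B"
    and bm: "\<forall>j<k. \<forall>j'<k. sq m (\<lambda>i. x j i - y j' i) \<le> B"
    and b0: "0 < \<beta>" and bB: "\<beta> \<le> B"
    and small: "(4 * real k^2 + 4 * real k) * exp (- (real l * \<beta>^2 / (16 * B^2))) < 1"
  shows "\<exists>G. (\<forall>j<k. \<bar>dev m l G (x j)\<bar> < real l * \<beta>) \<and> (\<forall>j<k. \<bar>dev m l G (y j)\<bar> < real l * \<beta>)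
           \<and> (\<forall>j<k. \<forall>j'<k. \<bar>dev m l G (\<lambda>i. x j i + y j' i)\<bar> < real l * \<beta>
                          \<and> \<bar>dev m l G (\<lambda>i. x j i - y j' i)\<bar> < real l * \<beta>)"
proof (rule ccontr)
  assume nex: "\<not> ?thesis"
  define t where "t = \<beta> / (8 * B^2)"
  have t0: "t \<ge> 0" using b0 by (simp add: t_def)
  define E where "E = 2 * exp (- (real l * \<beta>^2 / (16 * B^2)))"
  define P where "P = (\<lambda>z. phi m l t \<beta> z)"
  define F where "F = (\<lambda>G. (\<Sum>j<k. \<Sum>j'<k. P (\<lambda>i. x j i + y j' i) G + P (\<lambda>i. x j i - y j' i) G)
                         + (\<Sum>j<k. P (x j) G + P (y j) G))"
  have Pn: "P z G \<ge> 0" for z G unfolding P_def by (rule phi_nonneg)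
  have P1: "\<bar>dev m l G z\<bar> \<ge> real l * \<beta> \<Longrightarrow> P z G \<ge> 1" for z G
    unfolding P_def dev_def by (rule phi_ge1[OF t0])
  have PE: "sq m z \<le> B \<Longrightarrow> Erows m l (P z) \<le> E" for z
    unfolding P_def E_def by (rule event_bound[OF _ b0 bB t_def])
  have F1: "F G \<ge> 1" for G
  proof -
    have s1n: "(\<Sum>j<k. \<Sum>j'<k. P (\<lambda>i. x j i + y j' i) G + P (\<lambda>i. x j i - y j' i) G) \<ge> 0"
      by (intro sum_nonneg add_nonneg_nonneg Pn)
    have s2n: "(\<Sum>j<k. P (x j) G + P (y j) G) \<ge> 0"
      by (intro sum_nonneg add_nonneg_nonneg Pn)
    from nex have "(\<exists>j<k. \<bar>dev m l G (x j)\<bar> \<ge> real l * \<beta>) \<or> (\<exists>j<k. \<bar>dev m l G (y j)\<bar> \<ge> real l * \<beta>)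
           \<or> (\<exists>j<k. \<exists>j'<k. \<bar>dev m l G (\<lambda>i. x j i + y j' i)\<bar> \<ge> real l * \<beta>
                          \<or> \<bar>dev m l G (\<lambda>i. x j i - y j' i)\<bar> \<ge> real l * \<beta>)"
      by (auto simp: not_less)
    moreover have "F G \<ge> 1" if j: "j < k" "\<bar>dev m l G (x j)\<bar> \<ge> real l * \<beta>" for j
    proof -
      have "1 \<le> P (x j) G" using P1 j(2) .
      also have "\<dots> \<le> P (x j) G + P (y j) G" using Pn by simp
      also have "\<dots> \<le> (\<Sum>j<k. P (x j) G + P (y j) G)"
        using j(1) by (intro member_le_sum add_nonneg_nonneg Pn) auto
      finally show ?thesis unfolding F_def using s1n by linarith
    qed
    moreover have "F G \<ge> 1" if j: "j < k" "\<bar>dev m l G (y j)\<bar> \<ge> real l * \<beta>" for j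
    proof -
      have "1 \<le> P (y j) G" using P1 j(2) .
      also have "\<dots> \<le> P (x j) G + P (y j) G" using Pn by simp
      also have "\<dots> \<le> (\<Sum>j<k. P (x j) G + P (y j) G)"
        using j(1) by (intro member_le_sum add_nonneg_nonneg Pn) auto
      finally show ?thesis unfolding F_def using s1n by linarith
    qed
    moreover have "F G \<ge> 1" if j: "j < k" "j' < k" and d: "\<bar>dev m l G (\<lambda>i. x j i + y j' i)\<bar> \<ge> real l * \<beta>
                          \<or> \<bar>dev m l G (\<lambda>i. x j i - y j' i)\<bar> \<ge> real l * \<beta>" for j j'
    proof -
      have "1 \<le> P (\<lambda>i. x j i + y j' i) G + P (\<lambda>i. x j i - y j' i) G"
        using d P1 Pn by (smt (verit))
      also have "\<dots> \<le> (\<Sum>j'<k. P (\<lambda>i. x j i + y j' i) G + P (\<lambda>i. x j i - y j' i) G)"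
        using j(2) by (intro member_le_sum add_nonneg_nonneg Pn) auto
      also have "\<dots> \<le> (\<Sum>j<k. \<Sum>j'<k. P (\<lambda>i. x j i + y j' i) G + P (\<lambda>i. x j i - y j' i) G)"
        using j(1) by (intro member_le_sum sum_nonneg add_nonneg_nonneg Pn) auto
      finally show ?thesis unfolding F_def using s2n by linarith
    qed
    ultimately show ?thesis by blast
  qed
  have "1 \<le> Erows m l F"
    using Erows_mono[of "\<lambda>_. 1" F m l] F1 by (simp add: Erows_const)
  also have "Erows m l F = (\<Sum>j<k. \<Sum>j'<k. Erows m l (P (\<lambda>i. x j i + y j' i)) + Erows m l (P (\<lambda>i. x j i - y j' i)))
                         + (\<Sum>j<k. Erows m l (P (x j)) + Erows m l (P (y j)))"
    unfolding F_def by (simp add: Erows_add Erows_sum)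
  also have "\<dots> \<le> (\<Sum>j<k. \<Sum>j'<k. E + E) + (\<Sum>j<k. E + E)"
    using bx by' bp bm by (intro add_mono sum_mono PE) auto
  also have "\<dots> = (2 * real k^2 + 2 * real k) * E"
    by (simp add: power2_eq_square algebra_simps)
  also have "\<dots> < 1" using small by (simp add: E_def algebra_simps)
  finally show False by simp
qed


lemma col_norm_ge: "j < k \<Longrightarrow> sqrt (\<Sum>i<m. (L i j)^2) \<le> col_norm m k L"
  unfolding col_norm_def by (intro Max_ge) auto

lemma col_norm_nonneg: "0 < k \<Longrightarrow> 0 \<le> col_norm m k L"
  using col_norm_ge[of 0 k L m] by (smt (verit) real_sqrt_ge_zero sum_nonneg zero_le_power2)

lemma col_norm_le: "0 < k \<Longrightarrow> (\<And>j. j < k \<Longrightarrow> sqrt (\<Sum>i<m. (L i j)^2) \<le> c) \<Longrightarrow> col_norm m k L \<le> c"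
  unfolding col_norm_def by (subst Max_le_iff) auto

lemma col_sq_le: "j < k \<Longrightarrow> (\<Sum>i<m. (L i j)^2) \<le> (col_norm m k L)^2"
proof -
  assume j: "j < k"
  have nn: "0 \<le> (\<Sum>i<m. (L i j)^2)" by (intro sum_nonneg) auto
  hence "(\<Sum>i<m. (L i j)^2) = (sqrt (\<Sum>i<m. (L i j)^2))^2"
    by simp
  also have "\<dots> \<le> (col_norm m k L)^2"
    using col_norm_ge[OF j] nn by (intro power_mono) auto
  finally show ?thesis .
qed

lemma sq_add_le: "sq m (\<lambda>i. u i + v i) \<le> 2 * sq m u + 2 * sq m v"
proof -
  have "(u i + v i)^2 \<le> 2 * (u i)^2 + 2 * (v i)^2" for i
    using sum_squares_ge_zero[of "u i - v i" 0] by (simp add: power2_eq_square algebra_simps)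
  hence "sq m (\<lambda>i. u i + v i) \<le> (\<Sum>i<m. 2 * (u i)^2 + 2 * (v i)^2)"
    unfolding sq_def by (intro sum_mono) auto
  thus ?thesis by (simp add: sq_def sum.distrib sum_distrib_left)
qed

lemma sq_diff_le: "sq m (\<lambda>i. u i - v i) \<le> 2 * sq m u + 2 * sq m v"
  using sq_add_le[of m u "\<lambda>i. - v i"] by (simp add: sq_def)

lemma lin_add: "lin m e (\<lambda>i. u i + v i) = lin m e u + lin m e v"
  by (simp add: lin_def algebra_simps sum.distrib)

lemma lin_diff: "lin m e (\<lambda>i. u i - v i) = lin m e u - lin m e v"
  by (simp add: lin_def algebra_simps sum_subtractf)

lemma sq_polar: "sq m (\<lambda>i. u i + v i) - sq m (\<lambda>i. u i - v i) = 4 * (\<Sum>i<m. u i * v i)"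
  by (simp add: sq_def power2_eq_square algebra_simps sum_subtractf sum.distrib sum_distrib_left)


lemma main_lemma:
  fixes k :: nat and W :: "nat \<Rightarrow> nat \<Rightarrow> real" and \<alpha> :: real
  assumes k2: "k \<ge> 2" and a0: "0 < \<alpha>" and ag: "\<alpha> < gamma2 k W"
  shows "\<exists>l::nat. real l \<le> (1280 + 1 / ln 2) * (gamma2 k W)\<^sup>2 * ln (real k) / \<alpha>\<^sup>2 \<and>
                   gamma2_dim_approx l k W \<alpha> \<le> ereal (4 * gamma2 k W)"
proof -
  define \<gamma> where "\<gamma> = gamma2 k W"
  have k0: "0 < k" using k2 by simp
  have g0: "\<gamma> > 0" using a0 ag by (simp add: \<gamma>_def)
  define SS where "SS = {col_norm m k L * col_norm m k R | m L R. factors m k L R W}"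
  have gSS: "\<gamma> = Inf SS" by (simp add: \<gamma>_def gamma2_def SS_def)
  have ne: "SS \<noteq> {}"
  proof -
    have "factors k k (\<lambda>i j. if i = j then 1 else 0) W W"
      unfolding factors_def
    proof (intro allI impI)
      fix j j' assume "j < k" "j' < k"
      have "(\<Sum>i<k. (if i = j then 1 else 0) * W i j') = (\<Sum>i<k. if i = j then W i j' else 0)"
        by (intro sum.cong) auto
      thus "(\<Sum>i<k. (if i = j then 1 else 0) * W i j') = W j j'" using \<open>j < k\<close> by simp
    qed
    thus ?thesis unfolding SS_def by blast
  qed
  have bdd: "bdd_below SS"
    unfolding SS_def bdd_below_def
    by (rule exI[of _ 0]) (auto intro!: mult_nonneg_nonneg col_norm_nonneg k0)
  obtain m L R where fac: "factors m k L R W"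
    and lt: "col_norm m k L * col_norm m k R < 2 * \<gamma>"
  proof -
    have "Inf SS < 2 * \<gamma>" using g0 gSS by simp
    then obtain s where "s \<in> SS" "s < 2 * \<gamma>" using cInf_less_iff[OF ne bdd] by blast
    thus ?thesis using that unfolding SS_def by blast
  qed
  define a where "a = col_norm m k L"
  define b where "b = col_norm m k R"
  have ge: "\<gamma> \<le> a * b"
    unfolding gSS a_def b_def using fac by (intro cInf_lower bdd) (auto simp: SS_def)
  have a0': "a \<ge> 0" "b \<ge> 0" using col_norm_nonneg[OF k0] by (simp_all add: a_def b_def)
  have apos: "a > 0" and bpos: "b > 0"
    using ge g0 a0' by (smt (verit) mult_eq_0_iff)+
  have ab: "a * b < 2 * \<gamma>" using lt by (simp add: a_def b_def)
  define c where "c = sqrt (b / a)"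
  have c0: "c > 0" using apos bpos by (simp add: c_def)
  have c2: "c^2 = b / a" using apos bpos by (simp add: c_def)
  define x where "x = (\<lambda>j i. c * L i j)"
  define y where "y = (\<lambda>j i. R i j / c)"
  have sqx: "sq m (x j) \<le> a * b" if "j < k" for j
  proof -
    have "sq m (x j) = c^2 * (\<Sum>i<m. (L i j)^2)"
      by (simp add: sq_def x_def power_mult_distrib sum_distrib_left)
    also have "\<dots> \<le> c^2 * a^2"
      using col_sq_le[OF that, of L m] by (intro mult_left_mono) (auto simp: a_def)
    also have "\<dots> = a * b" using apos by (simp only: c2) (simp add: power2_eq_square field_simps)
    finally show ?thesis .
  qed
  have sqy: "sq m (y j) \<le> a * b" if "j < k" for j
  proof -
    have "sq m (y j) = (\<Sum>i<m. (R i j)^2) / c^2"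
      by (simp add: sq_def y_def power_divide sum_divide_distrib)
    also have "\<dots> \<le> b^2 / c^2"
      using col_sq_le[OF that, of R m] c0 by (intro divide_right_mono) (auto simp: b_def)
    also have "\<dots> = a * b" using apos bpos by (simp only: c2) (simp add: power2_eq_square field_simps)
    finally show ?thesis .
  qed
  have inner: "(\<Sum>i<m. x j i * y j' i) = W j j'" if "j < k" "j' < k" for j j'
  proof -
    have "(\<Sum>i<m. x j i * y j' i) = (\<Sum>i<m. L i j * R i j')"
      using c0 by (intro sum.cong) (auto simp: x_def y_def)
    thus ?thesis using fac that by (simp add: factors_def)
  qed
  define B where "B = 8 * \<gamma>"
  define \<beta> where "\<beta> = 2 * \<alpha>"
  have b0: "0 < \<beta>" using a0 by (simp add: \<beta>_def)
  have bB: "\<beta> \<le> B" using ag g0 by (simp add: \<beta>_def B_def \<gamma>_def)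
  have bx: "\<forall>j<k. sq m (x j) \<le> B"
  proof (intro allI impI)
    fix j assume "j < k"
    from sqx[OF this] ab g0 show "sq m (x j) \<le> B" unfolding B_def by linarith
  qed
  have by': "\<forall>j<k. sq m (y j) \<le> B"
  proof (intro allI impI)
    fix j assume "j < k"
    from sqy[OF this] ab g0 show "sq m (y j) \<le> B" unfolding B_def by linarith
  qed
  have bp: "\<forall>j<k. \<forall>j'<k. sq m (\<lambda>i. x j i + y j' i) \<le> B"
  proof (intro allI impI)
    fix j j' assume "j < k" "j' < k"
    from sqx[OF \<open>j < k\<close>] sqy[OF \<open>j' < k\<close>] sq_add_le[of m "x j" "y j'"] ab g0
    show "sq m (\<lambda>i. x j i + y j' i) \<le> B" unfolding B_def by linarith
  qed
  have bm: "\<forall>j<k. \<forall>j'<k. sq m (\<lambda>i. x j i - y j' i) \<le> B"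
  proof (intro allI impI)
    fix j j' assume "j < k" "j' < k"
    from sqx[OF \<open>j < k\<close>] sqy[OF \<open>j' < k\<close>] sq_diff_le[of m "x j" "y j'"] ab g0
    show "sq m (\<lambda>i. x j i - y j' i) \<le> B" unfolding B_def by linarith
  qed
  define X where "X = \<gamma>^2 * ln (real k) / \<alpha>^2"
  define l where "l = nat \<lfloor>1280 * X\<rfloor> + 1"
  have lnk: "ln (real k) \<ge> ln 2" using k2 by simp
  have ln2: "ln (2::real) > 0" by simp
  have ga: "\<gamma>^2 / \<alpha>^2 \<ge> 1"
  proof -
    have "\<alpha>^2 \<le> \<gamma>^2" using a0 ag by (intro power_mono) (auto simp: \<gamma>_def)
    thus ?thesis using a0 by simp
  qed
  have Xk: "X \<ge> ln (real k)"
  proof -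
    have "X = (\<gamma>^2 / \<alpha>^2) * ln (real k)" by (simp add: X_def)
    also have "\<dots> \<ge> 1 * ln (real k)" using ga lnk ln2 by (intro mult_right_mono) linarith+
    finally show ?thesis by simp
  qed
  have X0: "X \<ge> ln 2" using Xk lnk by simp
  have l_lo: "real l > 1280 * X"
  proof -
    have "1280 * X \<ge> 0" using X0 ln2 by linarith
    thus ?thesis unfolding l_def by (simp add: of_nat_nat) linarith
  qed
  have l_hi: "real l \<le> 1280 * X + 1"
  proof -
    have "1280 * X \<ge> 0" using X0 ln2 by linarith
    thus ?thesis unfolding l_def by (simp add: of_nat_nat)
  qed
  have lpos: "l > 0" by (simp add: l_def)
  have l_bound: "real l \<le> (1280 + 1 / ln 2) * \<gamma>\<^sup>2 * ln (real k) / \<alpha>\<^sup>2"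
  proof -
    have "1 \<le> X / ln 2" using X0 ln2 by simp
    hence "real l \<le> 1280 * X + X / ln 2" using l_hi by linarith
    also have "\<dots> = (1280 + 1 / ln 2) * \<gamma>\<^sup>2 * ln (real k) / \<alpha>\<^sup>2"
      using ln2 a0 by (simp add: X_def field_simps)
    finally show ?thesis .
  qed
  have small: "(4 * real k^2 + 4 * real k) * exp (- (real l * \<beta>^2 / (16 * B^2))) < 1"
  proof -
    have eqe: "real l * \<beta>^2 / (16 * B^2) = real l * \<alpha>^2 / (256 * \<gamma>^2)"
      by (simp add: \<beta>_def B_def power2_eq_square field_simps)
    have "real l * \<alpha>^2 / (256 * \<gamma>^2) > 1280 * X * \<alpha>^2 / (256 * \<gamma>^2)"
      using l_lo a0 g0 by (intro divide_strict_right_mono mult_strict_right_mono) auto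
    also have "1280 * X * \<alpha>^2 / (256 * \<gamma>^2) = 5 * ln (real k)"
      using a0 g0 by (simp add: X_def field_simps)
    finally have gt: "real l * \<beta>^2 / (16 * B^2) > ln (real k ^ 5)"
      using eqe k0 by (simp add: ln_realpow)
    have "exp (- (real l * \<beta>^2 / (16 * B^2))) < exp (- ln (real k ^ 5))"
      using gt by simp
    also have "\<dots> = 1 / real k ^ 5" using k0 by (simp add: exp_minus inverse_eq_divide)
    finally have e: "exp (- (real l * \<beta>^2 / (16 * B^2))) < 1 / real k ^ 5" .
    have kp: "4 * real k^2 + 4 * real k > 0" using k0 by (simp add: add_pos_nonneg)
    have "(4 * real k^2 + 4 * real k) * exp (- (real l * \<beta>^2 / (16 * B^2)))
        < (4 * real k^2 + 4 * real k) * (1 / real k ^ 5)"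
      using kp e by (intro mult_strict_left_mono) auto
    also have "\<dots> \<le> 1"
    proof -
      have k8: "real k ^ 3 \<ge> 8"
      proof -
        have "(2::real)^3 \<le> real k ^ 3" using k2 by (intro power_mono) auto
        thus ?thesis by simp
      qed
      have "4 * real k^2 + 4 * real k \<le> 8 * real k^2"
        using k2 by (simp add: power2_eq_square)
      also have "\<dots> \<le> real k ^ 3 * real k ^ 2" using k8 by (intro mult_right_mono) auto
      also have "\<dots> = real k ^ 5" by (simp flip: power_add)
      finally show ?thesis using k0 by (simp add: field_simps)
    qed
    finally show ?thesis .
  qed
  obtain G where
    gx: "\<forall>j<k. \<bar>dev m l G (x j)\<bar> < real l * \<beta>" and gy: "\<forall>j<k. \<bar>dev m l G (y j)\<bar> < real l * \<beta>"
    and gpm: "\<forall>j<k. \<forall>j'<k. \<bar>dev m l G (\<lambda>i. x j i + y j' i)\<bar> < real l * \<beta>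
                          \<and> \<bar>dev m l G (\<lambda>i. x j i - y j' i)\<bar> < real l * \<beta>"
    using jl_exists[OF bx by' bp bm b0 bB small] by blast
  define L' where "L' = (\<lambda>r j. lin m (G r) (x j) / sqrt (real l))"
  define R' where "R' = (\<lambda>r j. lin m (G r) (y j) / sqrt (real l))"
  define W' where "W' = (\<lambda>j j'. \<Sum>r<l. L' r j * R' r j')"
  have facW': "factors l k L' R' W'" by (simp add: factors_def W'_def)
  have sl: "sqrt (real l) * sqrt (real l) = real l" using lpos by simp
  have W'eq: "W' j j' = (\<Sum>r<l. lin m (G r) (x j) * lin m (G r) (y j')) / real l" for j j'
    by (simp add: W'_def L'_def R'_def sum_divide_distrib sl)
  have approx: "\<bar>W' j j' - W j j'\<bar> \<le> \<alpha>" if j: "j < k" "j' < k" for j j'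
  proof -
    define P where "P = (\<Sum>r<l. lin m (G r) (x j) * lin m (G r) (y j'))"
    have pol: "lin m (G r) (x j) * lin m (G r) (y j') =
        ((lin m (G r) (\<lambda>i. x j i + y j' i))^2 - (lin m (G r) (\<lambda>i. x j i - y j' i))^2) / 4" for r
      by (simp add: lin_add lin_diff power2_eq_square algebra_simps)
    have "dev m l G (\<lambda>i. x j i + y j' i) - dev m l G (\<lambda>i. x j i - y j' i)
        = 4 * P - real l * (sq m (\<lambda>i. x j i + y j' i) - sq m (\<lambda>i. x j i - y j' i))"
    proof -
      have P4: "4 * P = (\<Sum>r<l. (lin m (G r) (\<lambda>i. x j i + y j' i))^2) - (\<Sum>r<l. (lin m (G r) (\<lambda>i. x j i - y j' i))^2)"
        unfolding P_def pol by (simp add: sum_divide_distrib[symmetric] sum_subtractf)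
      show ?thesis unfolding dev_def using P4 by (simp add: algebra_simps)
    qed
    also have "\<dots> = 4 * P - 4 * real l * W j j'"
      using sq_polar inner[OF j] by simp
    finally have dd: "dev m l G (\<lambda>i. x j i + y j' i) - dev m l G (\<lambda>i. x j i - y j' i)
        = 4 * (P - real l * W j j')" by simp
    have g1: "\<bar>dev m l G (\<lambda>i. x j i + y j' i)\<bar> < real l * (2 * \<alpha>)"
      and g2: "\<bar>dev m l G (\<lambda>i. x j i - y j' i)\<bar> < real l * (2 * \<alpha>)"
      using gpm j by (auto simp: \<beta>_def)
    have "\<bar>4 * (P - real l * W j j')\<bar> < 4 * (real l * \<alpha>)"
      using g1 g2 unfolding dd[symmetric] by linarith
    hence lt1: "\<bar>P - real l * W j j'\<bar> < real l * \<alpha>" by simp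
    have "P / real l - W j j' = (P - real l * W j j') / real l" using lpos by (simp add: field_simps)
    hence "\<bar>P / real l - W j j'\<bar> = \<bar>P - real l * W j j'\<bar> / real l" by (simp add: abs_divide)
    also have "\<dots> < real l * \<alpha> / real l" using lt1 lpos by (intro divide_strict_right_mono) auto
    also have "\<dots> = \<alpha>" using lpos by simp
    finally have "\<bar>P / real l - W j j'\<bar> < \<alpha>" .
    thus ?thesis by (simp add: W'eq P_def)
  qed
  have colL: "col_norm l k L' \<le> 2 * sqrt \<gamma>"
  proof (rule col_norm_le[OF k0])
    fix j assume j: "j < k"
    have "(\<Sum>r<l. (L' r j)^2) = (\<Sum>r<l. (lin m (G r) (x j))^2) / real l"
      using lpos by (simp add: L'_def power_divide sum_divide_distrib)
    also have "\<dots> = (dev m l G (x j) + real l * sq m (x j)) / real l" by (simp add: dev_def)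
    also have "\<dots> = dev m l G (x j) / real l + sq m (x j)" using lpos by (simp add: field_simps)
    also have "\<dots> \<le> 4 * \<gamma>"
    proof -
      have "dev m l G (x j) < real l * \<beta>" using gx j by fastforce
      hence "dev m l G (x j) / real l < real l * \<beta> / real l" using lpos by (intro divide_strict_right_mono) auto
      hence "dev m l G (x j) / real l < \<beta>" using lpos by simp
      thus ?thesis using sqx[OF j] ab ag by (simp add: \<beta>_def \<gamma>_def)
    qed
    finally have "sqrt (\<Sum>r<l. (L' r j)^2) \<le> sqrt (4 * \<gamma>)" by simp
    also have "\<dots> = 2 * sqrt \<gamma>" by (simp add: real_sqrt_mult)
    finally show "sqrt (\<Sum>r<l. (L' r j)^2) \<le> 2 * sqrt \<gamma>" .
  qed
  have colR: "col_norm l k R' \<le> 2 * sqrt \<gamma>"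
  proof (rule col_norm_le[OF k0])
    fix j assume j: "j < k"
    have "(\<Sum>r<l. (R' r j)^2) = (\<Sum>r<l. (lin m (G r) (y j))^2) / real l"
      using lpos by (simp add: R'_def power_divide sum_divide_distrib)
    also have "\<dots> = (dev m l G (y j) + real l * sq m (y j)) / real l" by (simp add: dev_def)
    also have "\<dots> = dev m l G (y j) / real l + sq m (y j)" using lpos by (simp add: field_simps)
    also have "\<dots> \<le> 4 * \<gamma>"
    proof -
      have "dev m l G (y j) < real l * \<beta>" using gy j by fastforce
      hence "dev m l G (y j) / real l < real l * \<beta> / real l" using lpos by (intro divide_strict_right_mono) auto
      hence "dev m l G (y j) / real l < \<beta>" using lpos by simp
      thus ?thesis using sqy[OF j] ab ag by (simp add: \<beta>_def \<gamma>_def)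
    qed
    finally have "sqrt (\<Sum>r<l. (R' r j)^2) \<le> sqrt (4 * \<gamma>)" by simp
    also have "\<dots> = 2 * sqrt \<gamma>" by (simp add: real_sqrt_mult)
    finally show "sqrt (\<Sum>r<l. (R' r j)^2) \<le> 2 * sqrt \<gamma>" .
  qed
  have prod: "col_norm l k L' * col_norm l k R' \<le> 4 * \<gamma>"
  proof -
    have "col_norm l k L' * col_norm l k R' \<le> (2 * sqrt \<gamma>) * (2 * sqrt \<gamma>)"
      using colL colR col_norm_nonneg[OF k0] g0 by (intro mult_mono) auto
    also have "\<dots> = 4 * \<gamma>" using g0 by simp
    finally show ?thesis .
  qed
  have "gamma2_dim_approx l k W \<alpha> \<le> gamma2_dim l k W'"
    unfolding gamma2_dim_approx_def using approx by (intro Inf_lower) auto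
  also have "gamma2_dim l k W' \<le> ereal (col_norm l k L' * col_norm l k R')"
    unfolding gamma2_dim_def using facW' by (intro Inf_lower) auto
  also have "\<dots> \<le> ereal (4 * \<gamma>)" using prod by simp
  finally show ?thesis using l_bound by (auto simp: \<gamma>_def)
qed

theorem mainTheorem6:
  shows "\<exists>C1 > 0. \<exists>C2 > 0. \<forall>(k::nat) (W::nat \<Rightarrow> nat \<Rightarrow> real) (\<alpha>::real).
           k \<ge> 2 \<and> 0 < \<alpha> \<and> \<alpha> < gamma2 k W \<longrightarrow>
           (\<exists>l::nat. real l \<le> C1 * (gamma2 k W)\<^sup>2 * ln (real k) / \<alpha>\<^sup>2 \<and>
                     gamma2_dim_approx l k W \<alpha> \<le> ereal (C2 * gamma2 k W))"
proof -
  have pos: "(0::real) < 1280 + 1 / ln 2" by (simp add: add_pos_pos)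
  have "\<forall>(k::nat) (W::nat \<Rightarrow> nat \<Rightarrow> real) (\<alpha>::real).
           k \<ge> 2 \<and> 0 < \<alpha> \<and> \<alpha> < gamma2 k W \<longrightarrow>
           (\<exists>l::nat. real l \<le> (1280 + 1 / ln 2) * (gamma2 k W)\<^sup>2 * ln (real k) / \<alpha>\<^sup>2 \<and>
                     gamma2_dim_approx l k W \<alpha> \<le> ereal (4 * gamma2 k W))"
    using main_lemma by blast
  thus ?thesis using pos by (intro exI[of _ "1280 + 1 / ln 2"] conjI exI[of _ "4::real"]) auto
qed

end
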